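(* A Boolean set $p\colon X\to B$ has binary meets (i.e. $x\wedge y$ exists in $(X,\le)$ for all $x,y$) if and only if the total space $X^{\ast}$ of its dual étalé space $\widetilde p\colon X^{\ast}\to B^{\ast}$ is Hausdorff.
   Context: Convention: a "Boolean algebra" means a generalized Boolean algebra (relatively complemented distributive lattice with $0$). Boolean set: a presheaf of sets $p\colon X\to B$ over a Boolean algebra $B$ (pairwise disjoint $X_e$, restriction maps $x\mapsto x|^e_f$ for $e\ge f$ with $|^e_e=\mathrm{id}$, $(x|^e_f)|^f_g=x|^e_g$) with all $X_e\ne\emptyset$, such that under the order $x\le y$ iff $p(x)\le p(y)$ and $x=y|^{p(y)}_{p(x)}$ there is a least element $0$, compatible pairs ($x\wedge y$ exists and $p(x\wedge y)=p(x)\wedge p(y)$) have joins, and $p(x)=0\Rightarrow x=0$. Dual étalé space: $X^{\ast}$ is the set of ultrafilters (maximal proper non-empty down-directed upward-closed subsets) of $(X,\le)$ with topology generated by $L(a)=\{G\in X^{\ast}: a\in G\}$, $a\in X$; $B^{\ast}$ the set of ultrafilters of $B$ with basis $M(b)=\{F: b\in F\}$; $\widetilde p(G)=p(G)$. *)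

theory Defs
  imports "HOL-Analysis.Analysis"
begin

definition gen_boolean_algebra :: "'b::{distrib_lattice,bounded_lattice_bot} itself \<Rightarrow> bool" where
  "gen_boolean_algebra _ \<longleftrightarrow>
     (\<forall>a b c::'b. a \<le> b \<and> b \<le> c \<longrightarrow> (\<exists>d. inf b d = a \<and> sup b d = c))"

text \<open>Presheaf data: carrier X, projection p, restriction maps res e f x = x|^e_f.\<close>
definition bleq :: "('x \<Rightarrow> 'b::order) \<Rightarrow> ('b \<Rightarrow> 'b \<Rightarrow> 'x \<Rightarrow> 'x) \<Rightarrow> 'x \<Rightarrow> 'x \<Rightarrow> bool" where
  "bleq p res x y \<longleftrightarrow> p x \<le> p y \<and> x = res (p y) (p x) y"

definition is_meet :: "'x set \<Rightarrow> ('x \<Rightarrow> 'x \<Rightarrow> bool) \<Rightarrow> 'x \<Rightarrow> 'x \<Rightarrow> 'x \<Rightarrow> bool" where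
  "is_meet X le x y m \<longleftrightarrow> m \<in> X \<and> le m x \<and> le m y \<and>
     (\<forall>z\<in>X. le z x \<and> le z y \<longrightarrow> le z m)"

definition is_join :: "'x set \<Rightarrow> ('x \<Rightarrow> 'x \<Rightarrow> bool) \<Rightarrow> 'x \<Rightarrow> 'x \<Rightarrow> 'x \<Rightarrow> bool" where
  "is_join X le x y j \<longleftrightarrow> j \<in> X \<and> le x j \<and> le y j \<and>
     (\<forall>z\<in>X. le x z \<and> le y z \<longrightarrow> le j z)"

definition is_least :: "'x set \<Rightarrow> ('x \<Rightarrow> 'x \<Rightarrow> bool) \<Rightarrow> 'x \<Rightarrow> bool" where
  "is_least X le z \<longleftrightarrow> z \<in> X \<and> (\<forall>x\<in>X. le z x)"

definition boolean_set ::
  "'x set \<Rightarrow> ('x \<Rightarrow> 'b::{distrib_lattice,bounded_lattice_bot}) \<Rightarrow> ('b \<Rightarrow> 'b \<Rightarrow> 'x \<Rightarrow> 'x) \<Rightarrow> bool" where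
  "boolean_set X p res \<longleftrightarrow>
     gen_boolean_algebra TYPE('b) \<and>
     \<comment> \<open>presheaf over B with fibres X_e = {x \<in> X. p x = e}\<close>
     (\<forall>e f x. f \<le> e \<and> x \<in> X \<and> p x = e \<longrightarrow> res e f x \<in> X \<and> p (res e f x) = f) \<and>
     (\<forall>e x. x \<in> X \<and> p x = e \<longrightarrow> res e e x = x) \<and>
     (\<forall>e f g x. g \<le> f \<and> f \<le> e \<and> x \<in> X \<and> p x = e \<longrightarrow> res f g (res e f x) = res e g x) \<and>
     \<comment> \<open>all fibres nonempty\<close>
     (\<forall>e. \<exists>x\<in>X. p x = e) \<and>
     \<comment> \<open>least element\<close>
     (\<exists>z. is_least X (bleq p res) z) \<and>
     \<comment> \<open>compatible pairs have joins\<close>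
     (\<forall>x\<in>X. \<forall>y\<in>X. (\<exists>m. is_meet X (bleq p res) x y m \<and> p m = inf (p x) (p y))
         \<longrightarrow> (\<exists>j. is_join X (bleq p res) x y j)) \<and>
     \<comment> \<open>p x = 0 implies x = 0\<close>
     (\<forall>x\<in>X. p x = bot \<longrightarrow> is_least X (bleq p res) x)"

definition is_filter :: "'x set \<Rightarrow> ('x \<Rightarrow> 'x \<Rightarrow> bool) \<Rightarrow> 'x set \<Rightarrow> bool" where
  "is_filter X le F \<longleftrightarrow> F \<subseteq> X \<and> F \<noteq> {} \<and>
     (\<forall>a\<in>F. \<forall>b\<in>F. \<exists>c\<in>F. le c a \<and> le c b) \<and>
     (\<forall>a\<in>F. \<forall>b\<in>X. le a b \<longrightarrow> b \<in> F)"

definition is_ultrafilter :: "'x set \<Rightarrow> ('x \<Rightarrow> 'x \<Rightarrow> bool) \<Rightarrow> 'x set \<Rightarrow> bool" where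
  "is_ultrafilter X le F \<longleftrightarrow> is_filter X le F \<and> F \<noteq> X \<and>
     (\<forall>G. is_filter X le G \<and> G \<noteq> X \<and> F \<subseteq> G \<longrightarrow> G = F)"

definition dual_total_space :: "'x set \<Rightarrow> ('x \<Rightarrow> 'b::order) \<Rightarrow> ('b \<Rightarrow> 'b \<Rightarrow> 'x \<Rightarrow> 'x) \<Rightarrow> 'x set topology" where
  "dual_total_space X p res =
     topology_generated_by {{G. is_ultrafilter X (bleq p res) G \<and> a \<in> G} | a. a \<in> X}"

end

theory Submission
  imports Defs
begin


definition pfilter :: "'b::{distrib_lattice,bounded_lattice_bot} set \<Rightarrow> bool" where
  "pfilter F \<longleftrightarrow> (\<forall>a\<in>F. \<forall>b. a \<le> b \<longrightarrow> b \<in> F) \<and> (\<forall>a\<in>F. \<forall>b\<in>F. inf a b \<in> F) \<and> bot \<notin> F \<and>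
     (\<forall>a\<in>F. \<forall>b d. inf b d = bot \<and> sup b d = a \<longrightarrow> b \<in> F \<or> d \<in> F)"

lemma prime_exists:
  fixes I :: "'b::{distrib_lattice,bounded_lattice_bot} set"
  assumes down: "\<And>c c'. c \<in> I \<Longrightarrow> c' \<le> c \<Longrightarrow> c' \<in> I"
    and joins: "\<And>c c'. c \<in> I \<Longrightarrow> c' \<in> I \<Longrightarrow> sup c c' \<in> I"
    and botI: "bot \<in> I" and eI: "e \<notin> I"
  shows "\<exists>F. pfilter F \<and> e \<in> F \<and> F \<inter> I = {}"
proof -
  define A where "A = {F. (\<forall>a\<in>F. \<forall>b. a \<le> b \<longrightarrow> b \<in> F) \<and> (\<forall>a\<in>F. \<forall>b\<in>F. inf a b \<in> F) \<and> e \<in> F \<and> F \<inter> I = {}}"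
  have "{c. e \<le> c} \<in> A" using down eI unfolding A_def by (auto intro: le_infI1)
  then have Ane: "A \<noteq> {}" by blast
  have "\<exists>M\<in>A. \<forall>Y\<in>A. M \<subseteq> Y \<longrightarrow> Y = M"
  proof (rule subset_Zorn_nonempty[OF Ane])
    fix C assume Cne: "C \<noteq> {}" and ch: "subset.chain A C"
    have CA: "C \<subseteq> A" and tot: "\<And>x y. x \<in> C \<Longrightarrow> y \<in> C \<Longrightarrow> x \<subseteq> y \<or> y \<subseteq> x"
      using ch unfolding subset.chain_def by auto
    show "\<Union>C \<in> A" unfolding A_def
    proof (intro CollectI conjI ballI allI impI)
      fix a b assume "a \<in> \<Union>C" "a \<le> b" then show "b \<in> \<Union>C" using CA unfolding A_def by blast
    next
      fix a b assume "a \<in> \<Union>C" "b \<in> \<Union>C"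
      then obtain F1 F2 where "F1 \<in> C" "F2 \<in> C" "a \<in> F1" "b \<in> F2" by blast
      then show "inf a b \<in> \<Union>C" using tot[of F1 F2] CA unfolding A_def by blast
    next
      show "e \<in> \<Union>C" using Cne CA unfolding A_def by blast
    next
      show "\<Union>C \<inter> I = {}" using CA unfolding A_def by blast
    qed
  qed
  then obtain M where MA: "M \<in> A" and max: "\<And>Y. Y \<in> A \<Longrightarrow> M \<subseteq> Y \<Longrightarrow> Y = M" by blast
  have up: "\<And>a b. a \<in> M \<Longrightarrow> a \<le> b \<Longrightarrow> b \<in> M" and infc: "\<And>a b. a \<in> M \<Longrightarrow> b \<in> M \<Longrightarrow> inf a b \<in> M"
    and eM: "e \<in> M" and disj: "M \<inter> I = {}" using MA unfolding A_def by auto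
  have ext: "\<exists>m\<in>M. inf m b \<in> I" if "b \<notin> M" for b
  proof (rule ccontr)
    assume nex: "\<not> (\<exists>m\<in>M. inf m b \<in> I)"
    define M' where "M' = {c. \<exists>m\<in>M. inf m b \<le> c}"
    have "M' \<in> A" unfolding A_def
    proof (intro CollectI conjI ballI allI impI)
      fix a c assume "a \<in> M'" "a \<le> c" then show "c \<in> M'" unfolding M'_def using order_trans by blast
    next
      fix a c assume "a \<in> M'" "c \<in> M'"
      then obtain m1 m2 where m: "m1 \<in> M" "m2 \<in> M" "inf m1 b \<le> a" "inf m2 b \<le> c" unfolding M'_def by blast
      then have "inf (inf m1 m2) b \<le> inf a c"
        by (meson inf.bounded_iff inf_le1 inf_le2 order_trans)
      then show "inf a c \<in> M'" unfolding M'_def using infc m by blast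
    next
      show "e \<in> M'" unfolding M'_def using eM by (auto intro: le_infI1)
    next
      show "M' \<inter> I = {}" unfolding M'_def using nex down by blast
    qed
    moreover have "M \<subseteq> M'" unfolding M'_def by (auto intro: le_infI1)
    moreover have "b \<in> M'" unfolding M'_def using eM by auto
    ultimately show False using max that by blast
  qed
  have "pfilter M" unfolding pfilter_def
  proof (intro conjI ballI allI impI)
    show "\<And>a b. a \<in> M \<Longrightarrow> a \<le> b \<Longrightarrow> b \<in> M" by (rule up)
    show "\<And>a b. a \<in> M \<Longrightarrow> b \<in> M \<Longrightarrow> inf a b \<in> M" by (rule infc)
    show "bot \<notin> M" using disj botI by blast
  next
    fix a b d assume aM: "a \<in> M" and bd: "inf b d = bot \<and> sup b d = a"
    show "b \<in> M \<or> d \<in> M"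
    proof (rule ccontr)
      assume "\<not> (b \<in> M \<or> d \<in> M)"
      then obtain m1 m2 where m: "m1 \<in> M" "m2 \<in> M" "inf m1 b \<in> I" "inf m2 d \<in> I" using ext by blast
      have "inf (inf m1 m2) a = sup (inf (inf m1 m2) b) (inf (inf m1 m2) d)"
        using bd inf_sup_distrib1[of "inf m1 m2" b d] by simp
      also have "\<dots> \<le> sup (inf m1 b) (inf m2 d)"
        by (meson inf_le1 inf_le2 inf_mono order_trans sup_mono order_refl)
      finally have "inf (inf m1 m2) a \<in> I" using joins[OF m(3,4)] down by blast
      moreover have "inf (inf m1 m2) a \<in> M" using infc m aM by blast
      ultimately show False using disj by blast
    qed
  qed
  then show ?thesis using eM disj by blast
qed



locale bset =
  fixes X :: "'x set" and p :: "'x \<Rightarrow> 'b::{distrib_lattice,bounded_lattice_bot}"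
    and res :: "'b \<Rightarrow> 'b \<Rightarrow> 'x \<Rightarrow> 'x"
  assumes bs: "boolean_set X p res"
begin

abbreviation "lq \<equiv> bleq p res"
abbreviation "UF \<equiv> is_ultrafilter X lq"

lemma C1: "gen_boolean_algebra TYPE('b)"
  using bs unfolding boolean_set_def by (elim conjE)
lemma C2: "\<forall>e f x. f \<le> e \<and> x \<in> X \<and> p x = e \<longrightarrow> res e f x \<in> X \<and> p (res e f x) = f"
  using bs unfolding boolean_set_def by (elim conjE)
lemma C3: "\<forall>e x. x \<in> X \<and> p x = e \<longrightarrow> res e e x = x"
  using bs unfolding boolean_set_def by (elim conjE)
lemma C4: "\<forall>e f g x. g \<le> f \<and> f \<le> e \<and> x \<in> X \<and> p x = e \<longrightarrow> res f g (res e f x) = res e g x"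
  using bs unfolding boolean_set_def by (elim conjE)
lemma C5: "\<forall>e. \<exists>x\<in>X. p x = e"
  using bs unfolding boolean_set_def by (elim conjE)
lemma C7: "\<forall>x\<in>X. \<forall>y\<in>X. (\<exists>m. is_meet X (bleq p res) x y m \<and> p m = inf (p x) (p y))
         \<longrightarrow> (\<exists>j. is_join X (bleq p res) x y j)"
  using bs unfolding boolean_set_def by (elim conjE)
lemma C8: "\<forall>x\<in>X. p x = bot \<longrightarrow> is_least X (bleq p res) x"
  using bs unfolding boolean_set_def by (elim conjE)

lemma relcomp: "(b::'b) \<le> a \<Longrightarrow> \<exists>d. inf b d = bot \<and> sup b d = a"
  using C1[unfolded gen_boolean_algebra_def, rule_format, of bot b a] by simp

lemma res_in: "x \<in> X \<Longrightarrow> f \<le> p x \<Longrightarrow> res (p x) f x \<in> X"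
  using C2[rule_format, of f "p x" x] by simp
lemma p_res: "x \<in> X \<Longrightarrow> f \<le> p x \<Longrightarrow> p (res (p x) f x) = f"
  using C2[rule_format, of f "p x" x] by simp
lemma res_id: "x \<in> X \<Longrightarrow> res (p x) (p x) x = x"
  using C3[rule_format, of x "p x"] by simp
lemma res_comp: "x \<in> X \<Longrightarrow> g \<le> f \<Longrightarrow> f \<le> p x \<Longrightarrow> res f g (res (p x) f x) = res (p x) g x"
  using C4[rule_format, of g f "p x" x] by simp
lemma fibre: "\<exists>x\<in>X. p x = e"
  using C5 by blast
lemma bot_least: "x \<in> X \<Longrightarrow> p x = bot \<Longrightarrow> w \<in> X \<Longrightarrow> lq x w"
  using C8[rule_format, of x] unfolding is_least_def by simp
lemma joins: "x \<in> X \<Longrightarrow> y \<in> X \<Longrightarrow> is_meet X lq x y m \<Longrightarrow> p m = inf (p x) (p y) \<Longrightarrow> \<exists>j. is_join X lq x y j"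
  using C7[rule_format, of x y] by blast

lemma lq_refl: "x \<in> X \<Longrightarrow> lq x x"
  unfolding bleq_def using res_id by simp
lemma lq_p: "lq a b \<Longrightarrow> p a \<le> p b"
  unfolding bleq_def by simp
lemma lq_eq: "lq a b \<Longrightarrow> a = res (p b) (p a) b"
  unfolding bleq_def by simp
lemma lq_trans: "lq a b \<Longrightarrow> lq b c \<Longrightarrow> c \<in> X \<Longrightarrow> lq a c"
proof -
  assume a: "lq a b" "lq b c" "c \<in> X"
  then have "p a \<le> p b" "p b \<le> p c" "a = res (p b) (p a) b" "b = res (p c) (p b) c" unfolding bleq_def by auto
  then show ?thesis unfolding bleq_def using res_comp[OF a(3), of "p a" "p b"] by auto
qed
lemma lq_antisym: "lq a b \<Longrightarrow> lq b a \<Longrightarrow> b \<in> X \<Longrightarrow> a = b"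
proof -
  assume a: "lq a b" "lq b a" "b \<in> X"
  then have "p a = p b" "a = res (p b) (p a) b" unfolding bleq_def by auto
  then show ?thesis using res_id[OF a(3)] by simp
qed
lemma lq_res: "x \<in> X \<Longrightarrow> f \<le> p x \<Longrightarrow> lq (res (p x) f x) x"
  unfolding bleq_def using p_res by simp
lemma lq_res_mono: "x \<in> X \<Longrightarrow> g \<le> f \<Longrightarrow> f \<le> p x \<Longrightarrow> lq (res (p x) g x) (res (p x) f x)"
proof -
  assume a: "x \<in> X" "g \<le> f" "f \<le> p x"
  have "g \<le> p x" using a(2,3) by (rule order_trans)
  then show ?thesis unfolding bleq_def using p_res[OF a(1)] res_comp[OF a] a by auto
qed
lemma lq_iff: "x \<in> X \<Longrightarrow> lq z x \<longleftrightarrow> p z \<le> p x \<and> z = res (p x) (p z) x"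
  unfolding bleq_def by simp

lemma filt_up: "is_filter X lq G \<Longrightarrow> a \<in> G \<Longrightarrow> b \<in> X \<Longrightarrow> lq a b \<Longrightarrow> b \<in> G"
  unfolding is_filter_def by blast
lemma filt_dir: "is_filter X lq G \<Longrightarrow> a \<in> G \<Longrightarrow> b \<in> G \<Longrightarrow> \<exists>c\<in>G. lq c a \<and> lq c b"
  unfolding is_filter_def by blast
lemma filt_sub: "is_filter X lq G \<Longrightarrow> G \<subseteq> X"
  unfolding is_filter_def by blast

lemma UF_filt: "UF G \<Longrightarrow> is_filter X lq G"
  unfolding is_ultrafilter_def by blast

lemma UF_nobot: "UF G \<Longrightarrow> c \<in> G \<Longrightarrow> p c = bot \<Longrightarrow> False"
proof -
  assume G: "UF G" "c \<in> G" "p c = bot"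
  have "X \<subseteq> G"
  proof
    fix w assume "w \<in> X"
    then show "w \<in> G" using G filt_up[OF UF_filt[OF G(1)]] bot_least filt_sub[OF UF_filt[OF G(1)]] by blast
  qed
  then show False using G(1) filt_sub[OF UF_filt[OF G(1)]] unfolding is_ultrafilter_def by blast
qed

definition germ :: "'b set \<Rightarrow> 'x \<Rightarrow> 'x set" where
  "germ F x = {w\<in>X. \<exists>b\<in>F. b \<le> p x \<and> lq (res (p x) b x) w}"

lemma germ_mem: "x \<in> X \<Longrightarrow> b \<in> F \<Longrightarrow> b \<le> p x \<Longrightarrow> res (p x) b x \<in> germ F x"
proof -
  assume a: "x \<in> X" "b \<in> F" "b \<le> p x"
  have "res (p x) b x \<in> X" using res_in a by blast
  then show ?thesis unfolding germ_def using lq_refl a by blast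
qed

lemma germ_UF:
  assumes F: "pfilter F" and x: "x \<in> X" and px: "p x \<in> F"
  shows "UF (germ F x)"
proof -
  have Fup: "\<And>a b. a \<in> F \<Longrightarrow> a \<le> b \<Longrightarrow> b \<in> F" and Finf: "\<And>a b. a \<in> F \<Longrightarrow> b \<in> F \<Longrightarrow> inf a b \<in> F"
    and Fbot: "bot \<notin> F" and Fpr: "\<And>a b d. a \<in> F \<Longrightarrow> inf b d = bot \<Longrightarrow> sup b d = a \<Longrightarrow> b \<in> F \<or> d \<in> F"
    using F unfolding pfilter_def by blast+
  let ?G = "germ F x"
  have xG: "x \<in> ?G" using germ_mem[OF x px] res_id[OF x] by simp
  have filt: "is_filter X lq ?G" unfolding is_filter_def
  proof (intro conjI ballI allI impI)
    show "?G \<subseteq> X" unfolding germ_def by blast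
    show "?G \<noteq> {}" using xG by blast
  next
    fix a b assume a: "a \<in> ?G" and b: "b \<in> ?G"
    then obtain f g where f: "f \<in> F" "f \<le> p x" "lq (res (p x) f x) a" and g: "g \<in> F" "g \<le> p x" "lq (res (p x) g x) b"
      and aX: "a \<in> X" and bX: "b \<in> X" unfolding germ_def by blast
    let ?c = "res (p x) (inf f g) x"
    have c1: "lq ?c (res (p x) f x)" using lq_res_mono[OF x _ f(2)] by simp
    have c2: "lq ?c (res (p x) g x)" using lq_res_mono[OF x _ g(2)] by simp
    have "?c \<in> ?G" using germ_mem[OF x Finf[OF f(1) g(1)]] f(2) le_infI1 by blast
    moreover have "lq ?c a" using lq_trans[OF c1 f(3) aX] .
    moreover have "lq ?c b" using lq_trans[OF c2 g(3) bX] .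
    ultimately show "\<exists>c\<in>?G. lq c a \<and> lq c b" by blast
  next
    fix a b assume "a \<in> ?G" "b \<in> X" "lq a b"
    then obtain f where "f \<in> F" "f \<le> p x" "lq (res (p x) f x) a" unfolding germ_def by blast
    then show "b \<in> ?G" unfolding germ_def using lq_trans[of "res (p x) f x" a b] \<open>b \<in> X\<close> \<open>lq a b\<close> by blast
  qed
  obtain z where z: "z \<in> X" "p z = bot" using fibre by blast
  have zG: "z \<notin> ?G"
  proof
    assume "z \<in> ?G"
    then obtain b where "b \<in> F" "b \<le> p x" "lq (res (p x) b x) z" unfolding germ_def by blast
    then have "b \<le> bot" using lq_p[of "res (p x) b x" z] p_res[OF x] z by simp
    then show False using \<open>b \<in> F\<close> Fbot by (simp add: bot_unique)
  qed
  have max: "H = ?G" if H: "is_filter X lq H" "H \<noteq> X" "?G \<subseteq> H" for H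
  proof
    show "H \<subseteq> ?G"
    proof
      fix w assume wH: "w \<in> H"
      have xH: "x \<in> H" using H xG by blast
      obtain c where c: "c \<in> H" "lq c x" "lq c w" using filt_dir[OF H(1) xH wH] by blast
      have cX: "c \<in> X" using c filt_sub[OF H(1)] by blast
      have wX: "w \<in> X" using wH filt_sub[OF H(1)] by blast
      have pc: "p c \<le> p x" and ceq: "c = res (p x) (p c) x" using c(2) lq_iff[OF x] by auto
      obtain d where d: "inf (p c) d = bot" "sup (p c) d = p x" using relcomp[OF pc] by blast
      from Fpr[OF px d] show "w \<in> ?G"
      proof
        assume "p c \<in> F"
        have "lq (res (p x) (p c) x) w" using ceq c(3) by simp
        then show "w \<in> ?G" unfolding germ_def using wX pc \<open>p c \<in> F\<close> by blast
      next
        assume dF: "d \<in> F"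
        have dle: "d \<le> p x" using d(2) by (metis sup.cobounded2)
        have "res (p x) d x \<in> H" using germ_mem[OF x dF dle] H(3) by blast
        then obtain c' where c': "c' \<in> H" "lq c' c" "lq c' (res (p x) d x)" using filt_dir[OF H(1) c(1)] by blast
        have "p c' \<le> inf (p c) d" using lq_p[OF c'(2)] lq_p[OF c'(3)] p_res[OF x dle] by simp
        then have pc': "p c' = bot" using d(1) by (simp add: bot_unique)
        have c'X: "c' \<in> X" using c' filt_sub[OF H(1)] by blast
        have "X \<subseteq> H" using bot_least[OF c'X pc'] filt_up[OF H(1) c'(1)] by blast
        then have False using H(2) filt_sub[OF H(1)] by blast
        then show "w \<in> ?G" by blast
      qed
    qed
  next
    show "?G \<subseteq> H" by (rule H(3))
  qed
  show ?thesis unfolding is_ultrafilter_def using filt zG z(1) max by blast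
qed

end


context bset begin

abbreviation "SS \<equiv> {{G. UF G \<and> a \<in> G} | a. a \<in> X}"

lemma open_basic:
  assumes "generate_topology_on SS U"
  shows "\<forall>G. G \<in> U \<longrightarrow> UF G \<longrightarrow> (\<exists>a\<in>G. {H. UF H \<and> a \<in> H} \<subseteq> U)"
  using assms
proof (induction rule: generate_topology_on.induct)
  case Empty
  then show ?case by simp
next
  case (Int U1 U2)
  show ?case
  proof (intro allI impI)
    fix G assume G: "G \<in> U1 \<inter> U2" "UF G"
    obtain a1 where a1: "a1 \<in> G" "{H. UF H \<and> a1 \<in> H} \<subseteq> U1" using Int.IH(1) G by blast
    obtain a2 where a2: "a2 \<in> G" "{H. UF H \<and> a2 \<in> H} \<subseteq> U2" using Int.IH(2) G by blast
    obtain c where c: "c \<in> G" "lq c a1" "lq c a2" using filt_dir[OF UF_filt[OF G(2)] a1(1) a2(1)] by blast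
    have X12: "a1 \<in> X" "a2 \<in> X" using a1 a2 filt_sub[OF UF_filt[OF G(2)]] by auto
    have "{H. UF H \<and> c \<in> H} \<subseteq> U1 \<inter> U2"
    proof
      fix H assume "H \<in> {H. UF H \<and> c \<in> H}"
      then have H: "UF H" "c \<in> H" by auto
      have "a1 \<in> H" using filt_up[OF UF_filt[OF H(1)] H(2) X12(1) c(2)] .
      moreover have "a2 \<in> H" using filt_up[OF UF_filt[OF H(1)] H(2) X12(2) c(3)] .
      ultimately show "H \<in> U1 \<inter> U2" using a1(2) a2(2) H(1) by blast
    qed
    then show "\<exists>a\<in>G. {H. UF H \<and> a \<in> H} \<subseteq> U1 \<inter> U2" using c(1) by blast
  qed
next
  case (UN K)
  show ?case
  proof (intro allI impI)
    fix G assume G: "G \<in> \<Union>K" "UF G"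
    then obtain k where k: "k \<in> K" "G \<in> k" by blast
    then obtain a where "a \<in> G" "{H. UF H \<and> a \<in> H} \<subseteq> k" using UN.IH G(2) by blast
    then show "\<exists>a\<in>G. {H. UF H \<and> a \<in> H} \<subseteq> \<Union>K" using k(1) by blast
  qed
next
  case (Basis s)
  then obtain a where a: "s = {G. UF G \<and> a \<in> G}" "a \<in> X" by blast
  show ?case using a by blast
qed

lemma basic_open: "a \<in> X \<Longrightarrow> openin (dual_total_space X p res) {G. UF G \<and> a \<in> G}"
  unfolding dual_total_space_def openin_topology_generated_by_iff
  by (rule generate_topology_on.Basis) blast

lemma topspace_dual: "topspace (dual_total_space X p res) = \<Union>SS"
  unfolding dual_total_space_def by simp

lemma sep_meets:
  assumes meets: "\<forall>x\<in>X. \<forall>y\<in>X. \<exists>m. is_meet X lq x y m"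
    and F: "UF F" and G: "UF G" and FG: "F \<noteq> G"
  shows "\<exists>a\<in>F. \<exists>b\<in>G. \<forall>K. UF K \<longrightarrow> a \<in> K \<longrightarrow> b \<in> K \<longrightarrow> False"
proof -
  have fF: "is_filter X lq F" and fG: "is_filter X lq G" using F G UF_filt by auto
  have FX: "F \<subseteq> X" and GX: "G \<subseteq> X" using fF fG filt_sub by auto
  define H where "H = {w\<in>X. \<exists>a\<in>F. \<exists>b\<in>G. \<exists>m. is_meet X lq a b m \<and> lq m w}"
  have Gne: "G \<noteq> {}" and Fne: "F \<noteq> {}" using fF fG unfolding is_filter_def by auto
  have FH: "F \<subseteq> H"
  proof
    fix a assume aF: "a \<in> F"
    obtain b where bG: "b \<in> G" using Gne by blast
    obtain m where m: "is_meet X lq a b m" using meets aF bG FX GX by blast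
    then show "a \<in> H" unfolding H_def is_meet_def using aF bG FX by blast
  qed
  have GH: "G \<subseteq> H"
  proof
    fix b assume bG: "b \<in> G"
    obtain a where aF: "a \<in> F" using Fne by blast
    obtain m where m: "is_meet X lq a b m" using meets aF bG FX GX by blast
    then show "b \<in> H" unfolding H_def is_meet_def using aF bG GX by blast
  qed
  have fH: "is_filter X lq H" unfolding is_filter_def
  proof (intro conjI ballI allI impI)
    show "H \<subseteq> X" unfolding H_def by blast
    show "H \<noteq> {}" using FH Fne by blast
  next
    fix w1 w2 assume "w1 \<in> H" "w2 \<in> H"
    then obtain a1 b1 m1 a2 b2 m2 where w: "w1 \<in> X" "a1 \<in> F" "b1 \<in> G" "is_meet X lq a1 b1 m1" "lq m1 w1"
      "w2 \<in> X" "a2 \<in> F" "b2 \<in> G" "is_meet X lq a2 b2 m2" "lq m2 w2" unfolding H_def by blast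
    obtain c where c: "c \<in> F" "lq c a1" "lq c a2" using filt_dir[OF fF w(2) w(7)] by blast
    obtain d where d: "d \<in> G" "lq d b1" "lq d b2" using filt_dir[OF fG w(3) w(8)] by blast
    obtain n where n: "is_meet X lq c d n" using meets c(1) d(1) FX GX by blast
    have nX: "n \<in> X" and nc: "lq n c" and nd: "lq n d" using n unfolding is_meet_def by auto
    have X1: "a1 \<in> X" "a2 \<in> X" "b1 \<in> X" "b2 \<in> X" using w FX GX by auto
    have "lq n a1" using lq_trans[OF nc c(2) X1(1)] .
    moreover have "lq n b1" using lq_trans[OF nd d(2) X1(3)] .
    ultimately have "lq n m1" using w(4) nX unfolding is_meet_def by blast
    then have n1: "lq n w1" using lq_trans w(1,5) by blast
    have "lq n a2" using lq_trans[OF nc c(3) X1(2)] .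
    moreover have "lq n b2" using lq_trans[OF nd d(3) X1(4)] .
    ultimately have "lq n m2" using w(9) nX unfolding is_meet_def by blast
    then have n2: "lq n w2" using lq_trans w(6,10) by blast
    have "n \<in> H" unfolding H_def using nX c(1) d(1) n lq_refl[OF nX] by blast
    then show "\<exists>c\<in>H. lq c w1 \<and> lq c w2" using n1 n2 by blast
  next
    fix a b assume "a \<in> H" "b \<in> X" "lq a b"
    then show "b \<in> H" unfolding H_def using lq_trans by blast
  qed
  have "H = X"
  proof (rule ccontr)
    assume HX: "H \<noteq> X"
    have "H = F" using F fH HX FH unfolding is_ultrafilter_def by blast
    moreover have "H = G" using G fH HX GH unfolding is_ultrafilter_def by blast
    ultimately show False using FG by blast
  qed
  obtain z where z: "z \<in> X" "p z = bot" using fibre by blast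
  then have "z \<in> H" using \<open>H = X\<close> by blast
  then obtain a b m where abm: "a \<in> F" "b \<in> G" "is_meet X lq a b m" "lq m z" unfolding H_def by blast
  have mX: "m \<in> X" using abm(3) unfolding is_meet_def by blast
  have mleast: "\<And>w. w \<in> X \<Longrightarrow> lq m w" using lq_trans[OF abm(4) bot_least[OF z]] by blast
  have "\<forall>K. UF K \<longrightarrow> a \<in> K \<longrightarrow> b \<in> K \<longrightarrow> False"
  proof (intro allI impI)
    fix K assume K: "UF K" "a \<in> K" "b \<in> K"
    have fK: "is_filter X lq K" using UF_filt[OF K(1)] .
    obtain c where c: "c \<in> K" "lq c a" "lq c b" using filt_dir[OF fK K(2,3)] by blast
    have cX: "c \<in> X" using c(1) filt_sub[OF fK] by blast
    have "lq c m" using abm(3) cX c unfolding is_meet_def by blast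
    then have "\<And>w. w \<in> X \<Longrightarrow> lq c w" using lq_trans mleast by blast
    then have "X \<subseteq> K" using filt_up[OF fK c(1)] by blast
    then show False using K(1) filt_sub[OF fK] unfolding is_ultrafilter_def by blast
  qed
  then show ?thesis using abm(1,2) by blast
qed


lemma dir1:
  assumes meets: "\<forall>x\<in>X. \<forall>y\<in>X. \<exists>m. is_meet X lq x y m"
  shows "Hausdorff_space (dual_total_space X p res)"
  unfolding Hausdorff_space_def topspace_dual
proof (intro allI impI)
  fix F G assume "F \<in> \<Union>SS \<and> G \<in> \<Union>SS \<and> F \<noteq> G"
  then have F: "UF F" and G: "UF G" and FG: "F \<noteq> G" by auto
  obtain a b where ab: "a \<in> F" "b \<in> G" "\<forall>K. UF K \<longrightarrow> a \<in> K \<longrightarrow> b \<in> K \<longrightarrow> False"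
    using sep_meets[OF meets F G FG] by blast
  have aX: "a \<in> X" and bX: "b \<in> X" using ab F G filt_sub UF_filt by blast+
  show "\<exists>U V. openin (dual_total_space X p res) U \<and> openin (dual_total_space X p res) V \<and> F \<in> U \<and> G \<in> V \<and> disjnt U V"
    apply (rule exI[of _ "{G. UF G \<and> a \<in> G}"], rule exI[of _ "{G. UF G \<and> b \<in> G}"])
    using basic_open[OF aX] basic_open[OF bX] ab F G unfolding disjnt_def by blast
qed

end


context bset begin

lemma separated:
  assumes u: "u \<in> X" and v: "v \<in> X" and pu: "p u = s" and pv: "p v = s"
    and bs': "b \<le> s" and cs: "c \<le> s" and bc: "sup b c = s"
    and eb: "res s b u = res s b v" and ec: "res s c u = res s c v"
  shows "u = v"
proof -
  let ?ub = "res s b u" and ?uc = "res s c u" and ?m = "res s (inf b c) u"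
  have bu: "b \<le> p u" and cu: "c \<le> p u" using bs' cs pu by auto
  have bcu: "inf b c \<le> p u" using bu le_infI1 by blast
  have ubX: "?ub \<in> X" and ucX: "?uc \<in> X" and mX: "?m \<in> X" using res_in[OF u] bu cu bcu pu by auto
  have pub: "p ?ub = b" and puc: "p ?uc = c" and pm: "p ?m = inf b c" using p_res[OF u] bu cu bcu pu by auto
  have m1: "lq ?m ?ub" using lq_res_mono[OF u _ bu] pu by simp
  have m2: "lq ?m ?uc" using lq_res_mono[OF u _ cu] pu by simp
  have meet: "is_meet X lq ?ub ?uc ?m" unfolding is_meet_def
  proof (intro conjI ballI impI)
    show "?m \<in> X" "lq ?m ?ub" "lq ?m ?uc" by (fact mX, fact m1, fact m2)
  next
    fix z assume zX: "z \<in> X" and z: "lq z ?ub \<and> lq z ?uc"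
    have zb: "p z \<le> b" and zb': "z = res b (p z) ?ub" using z lq_iff[OF ubX] pub by auto
    have zc: "p z \<le> c" using z lq_iff[OF ucX] puc by auto
    have zbc: "p z \<le> inf b c" using zb zc by simp
    have z1: "z = res s (p z) u" using zb' res_comp[OF u zb bu] pu by simp
    have "res (inf b c) (p z) ?m = res s (p z) u" using res_comp[OF u zbc bcu] pu by simp
    then show "lq z ?m" using lq_iff[OF mX] pm zbc z1 by simp
  qed
  have "p ?m = inf (p ?ub) (p ?uc)" using pm pub puc by simp
  then obtain j where j: "is_join X lq ?ub ?uc j" using joins[OF ubX ucX meet] by blast
  have jX: "j \<in> X" and j1: "lq ?ub j" and j2: "lq ?uc j" and jl: "\<And>w. w \<in> X \<Longrightarrow> lq ?ub w \<Longrightarrow> lq ?uc w \<Longrightarrow> lq j w"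
    using j unfolding is_join_def by auto
  have "lq ?ub u" using lq_res[OF u bu] pu by simp
  moreover have "lq ?uc u" using lq_res[OF u cu] pu by simp
  ultimately have ju: "lq j u" using jl u by blast
  have bv: "b \<le> p v" and cv: "c \<le> p v" using bs' cs pv by auto
  have "lq ?ub v" using lq_res[OF v bv] pv eb by simp
  moreover have "lq ?uc v" using lq_res[OF v cv] pv ec by simp
  ultimately have jv: "lq j v" using jl v by blast
  have "b \<le> p j" using lq_p[OF j1] pub by simp
  moreover have "c \<le> p j" using lq_p[OF j2] puc by simp
  ultimately have "s \<le> p j" using bc by (metis sup_least)
  moreover have "p j \<le> s" using lq_p[OF ju] pu by simp
  ultimately have pj: "p j = s" by simp
  have "j = u" using lq_eq[OF ju] pj pu res_id[OF u] by simp
  moreover have "j = v" using lq_eq[OF jv] pj pv res_id[OF v] by simp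
  ultimately show ?thesis by simp
qed

end


context bset begin

lemma dir2:
  assumes Hd: "Hausdorff_space (dual_total_space X p res)" and x0: "x0 \<in> X" and y0: "y0 \<in> X"
  shows "\<exists>m. is_meet X lq x0 y0 m"
proof -
  define e where "e = inf (p x0) (p y0)"
  have ex: "e \<le> p x0" and ey: "e \<le> p y0" unfolding e_def by auto
  define x where "x = res (p x0) e x0"
  define y where "y = res (p y0) e y0"
  have xX: "x \<in> X" and yX: "y \<in> X" using res_in x0 y0 ex ey unfolding x_def y_def by auto
  have px: "p x = e" and py: "p y = e" using p_res x0 y0 ex ey unfolding x_def y_def by auto
  have rx: "\<And>g f. g \<le> f \<Longrightarrow> f \<le> e \<Longrightarrow> res f g (res e f x) = res e g x" using res_comp[OF xX] px by simp
  have ry: "\<And>g f. g \<le> f \<Longrightarrow> f \<le> e \<Longrightarrow> res f g (res e f y) = res e g y" using res_comp[OF yX] py by simp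
  define D where "D = {b. b \<le> e \<and> res e b x = res e b y}"
  define J where "J = {j. \<forall>b\<in>D. inf b j = bot}"
  define I where "I = {c. \<exists>d\<in>D. \<exists>j\<in>J. c \<le> sup d j}"
  have Ddown: "b' \<in> D" if "b \<in> D" "b' \<le> b" for b b'
  proof -
    have "b' \<le> e" using that unfolding D_def by auto
    moreover have "res e b' x = res e b' y" using rx[of b' b] ry[of b' b] that unfolding D_def by auto
    ultimately show ?thesis unfolding D_def by simp
  qed
  have botD: "bot \<in> D"
  proof -
    have b1: "res e bot x \<in> X" "p (res e bot x) = bot" using res_in[OF xX] p_res[OF xX] px by auto
    have b2: "res e bot y \<in> X" "p (res e bot y) = bot" using res_in[OF yX] p_res[OF yX] py by auto
    have "res e bot x = res e bot y" using lq_antisym[OF bot_least[OF b1 b2(1)] bot_least[OF b2 b1(1)] b2(1)] .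
    then show ?thesis unfolding D_def by simp
  qed
  have Dsup: "sup d1 d2 \<in> D" if d: "d1 \<in> D" "d2 \<in> D" for d1 d2
  proof -
    have d1e: "d1 \<le> e" and d2e: "d2 \<le> e" using d unfolding D_def by auto
    let ?s = "sup d1 d2"
    have se: "?s \<le> e" using d1e d2e by simp
    have uX: "res e ?s x \<in> X" using res_in[OF xX] px se by simp
    have vX: "res e ?s y \<in> X" using res_in[OF yX] py se by simp
    have pu: "p (res e ?s x) = ?s" using p_res[OF xX] px se by simp
    have pv: "p (res e ?s y) = ?s" using p_res[OF yX] py se by simp
    have "res e ?s x = res e ?s y"
    proof (rule separated[OF uX vX pu pv, of d1 d2])
      show "d1 \<le> ?s" "d2 \<le> ?s" "sup d1 d2 = ?s" by auto
      show "res ?s d1 (res e ?s x) = res ?s d1 (res e ?s y)" using rx[of d1 ?s] ry[of d1 ?s] se d(1) unfolding D_def by auto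
      show "res ?s d2 (res e ?s x) = res ?s d2 (res e ?s y)" using rx[of d2 ?s] ry[of d2 ?s] se d(2) unfolding D_def by auto
    qed
    then show ?thesis using se unfolding D_def by simp
  qed
  have botJ: "bot \<in> J" unfolding J_def by simp
  have Jsup: "sup j1 j2 \<in> J" if "j1 \<in> J" "j2 \<in> J" for j1 j2
    using that unfolding J_def by (simp add: inf_sup_distrib1)
  have Idown: "c' \<in> I" if "c \<in> I" "c' \<le> c" for c c'
    using that order_trans unfolding I_def by blast
  have Isup: "sup c c' \<in> I" if cc: "c \<in> I" "c' \<in> I" for c c'
  proof -
    obtain d j d' j' where dj: "d \<in> D" "j \<in> J" "c \<le> sup d j" "d' \<in> D" "j' \<in> J" "c' \<le> sup d' j'"
      using cc unfolding I_def by blast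
    have "sup c c' \<le> sup (sup d d') (sup j j')" using dj(3,6)
      by (meson le_supI order_trans sup_mono sup_ge1 sup_ge2)
    then show ?thesis unfolding I_def using Dsup[OF dj(1,4)] Jsup[OF dj(2,5)] by blast
  qed
  have botI: "bot \<in> I" unfolding I_def using botD botJ by force
  have eI: "e \<in> I"
  proof (rule ccontr)
    assume neI: "e \<notin> I"
    have "\<exists>F. pfilter F \<and> e \<in> F \<and> F \<inter> I = {}"
    proof (rule prime_exists)
      show "\<And>c c'. c \<in> I \<Longrightarrow> c' \<le> c \<Longrightarrow> c' \<in> I" by (rule Idown)
      show "\<And>c c'. c \<in> I \<Longrightarrow> c' \<in> I \<Longrightarrow> sup c c' \<in> I" by (rule Isup)
      show "bot \<in> I" by (rule botI)
      show "e \<notin> I" by (rule neI)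
    qed
    then obtain F where F: "pfilter F" "e \<in> F" "F \<inter> I = {}" by blast
    have Fup: "\<And>a b. a \<in> F \<Longrightarrow> a \<le> b \<Longrightarrow> b \<in> F" and Finf: "\<And>a b. a \<in> F \<Longrightarrow> b \<in> F \<Longrightarrow> inf a b \<in> F"
      using F(1) unfolding pfilter_def by blast+
    let ?Gx = "germ F x" and ?Gy = "germ F y"
    have UGx: "UF ?Gx" using germ_UF[OF F(1) xX] px F(2) by simp
    have UGy: "UF ?Gy" using germ_UF[OF F(1) yX] py F(2) by simp
    have xGx: "x \<in> ?Gx" using germ_mem[OF xX F(2)] px res_id[OF xX] by simp
    have yGy: "y \<in> ?Gy" using germ_mem[OF yX F(2)] py res_id[OF yX] by simp
    show False
    proof (cases "?Gx = ?Gy")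
      case True
      then have "x \<in> ?Gy" using xGx by simp
      then obtain b where b: "b \<in> F" "b \<le> e" "lq (res e b y) x" unfolding germ_def using py by auto
      have "res e b y = res e b x" using lq_eq[OF b(3)] p_res[OF yX] py px b(2) by simp
      then have "b \<in> D" using b(2) unfolding D_def by simp
      then have "b \<in> I" unfolding I_def using botJ by force
      then show False using F(3) b(1) by blast
    next
      case False
      have "?Gx \<in> topspace (dual_total_space X p res)" unfolding topspace_dual using UGx xGx xX by blast
      moreover have "?Gy \<in> topspace (dual_total_space X p res)" unfolding topspace_dual using UGy yGy yX by blast
      ultimately obtain U V where UV: "openin (dual_total_space X p res) U" "openin (dual_total_space X p res) V"
        "?Gx \<in> U" "?Gy \<in> V" "disjnt U V"
        using Hd False unfolding Hausdorff_space_def by blast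
      have gU: "generate_topology_on SS U" and gV: "generate_topology_on SS V"
        using UV(1,2) unfolding dual_total_space_def openin_topology_generated_by_iff by auto
      obtain a where a: "a \<in> ?Gx" "{H. UF H \<and> a \<in> H} \<subseteq> U" using open_basic[OF gU] UV(3) UGx by blast
      obtain a' where a': "a' \<in> ?Gy" "{H. UF H \<and> a' \<in> H} \<subseteq> V" using open_basic[OF gV] UV(4) UGy by blast
      obtain b where b: "b \<in> F" "b \<le> e" "lq (res e b x) a" and aX: "a \<in> X" using a(1) unfolding germ_def using px by auto
      obtain b' where b': "b' \<in> F" "b' \<le> e" "lq (res e b' y) a'" and a'X: "a' \<in> X" using a'(1) unfolding germ_def using py by auto
      define c where "c = inf b b'"
      have cF: "c \<in> F" unfolding c_def using Finf b(1) b'(1) by blast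
      have cJ: "c \<in> J" unfolding J_def
      proof (intro CollectI ballI)
        fix b0 assume b0: "b0 \<in> D"
        show "inf b0 c = bot"
        proof (rule ccontr)
          assume gne: "inf b0 c \<noteq> bot"
          let ?g = "inf b0 c"
          have "\<exists>F'. pfilter F' \<and> ?g \<in> F' \<and> F' \<inter> {bot} = {}"
            by (rule prime_exists) (use gne in \<open>auto simp: bot_unique\<close>)
          then obtain F' where F': "pfilter F'" "?g \<in> F'" by blast
          have gb: "?g \<le> b" and gb': "?g \<le> b'" and gb0: "?g \<le> b0" unfolding c_def by (auto intro: le_infI2)
          have ge: "?g \<le> e" using gb b(2) by (rule order_trans)
          have eF': "e \<in> F'" using F'(1) F'(2) ge unfolding pfilter_def by blast
          let ?K = "germ F' x"
          have UK: "UF ?K" using germ_UF[OF F'(1) xX] px eF' by simp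
          have gK: "res e ?g x \<in> ?K" using germ_mem[OF xX F'(2)] px ge by simp
          have KX: "?K \<subseteq> X" using filt_sub[OF UF_filt[OF UK]] .
          have "lq (res e ?g x) (res e b x)" using lq_res_mono[OF xX gb] px b(2) by simp
          then have "lq (res e ?g x) a" using lq_trans[OF _ b(3) aX] by blast
          then have "a \<in> ?K" using filt_up[OF UF_filt[OF UK] gK aX] by blast
          then have KU: "?K \<in> U" using a(2) UK by blast
          have "res e ?g x = res e ?g y" using Ddown[OF b0 gb0] unfolding D_def by simp
          moreover have "lq (res e ?g y) (res e b' y)" using lq_res_mono[OF yX gb'] py b'(2) by simp
          ultimately have "lq (res e ?g x) a'" using lq_trans[OF _ b'(3) a'X] by simp
          then have "a' \<in> ?K" using filt_up[OF UF_filt[OF UK] gK a'X] by blast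
          then have KV: "?K \<in> V" using a'(2) UK by blast
          show False using KU KV UV(5) unfolding disjnt_def by blast
        qed
      qed
      have "c \<in> I" unfolding I_def using botD cJ by force
      then show False using F(3) cF by blast
    qed
  qed
  then obtain d j where dj: "d \<in> D" "j \<in> J" "e \<le> sup d j" unfolding I_def by blast
  have de: "d \<le> e" and dxy: "res e d x = res e d y" using dj(1) unfolding D_def by auto
  define m where "m = res e d x"
  have mX: "m \<in> X" unfolding m_def using res_in[OF xX] px de by simp
  have pm: "p m = d" unfolding m_def using p_res[OF xX] px de by simp
  have mx0: "m = res (p x0) d x0" unfolding m_def x_def using res_comp[OF x0 de ex] by simp
  have my0: "m = res (p y0) d y0" unfolding m_def dxy y_def using res_comp[OF y0 de ey] by simp
  have dx0: "d \<le> p x0" and dy0: "d \<le> p y0" using de ex ey by auto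
  have "is_meet X lq x0 y0 m" unfolding is_meet_def
  proof (intro conjI ballI impI)
    show "m \<in> X" by (fact mX)
    show "lq m x0" using lq_res[OF x0 dx0] mx0 by simp
    show "lq m y0" using lq_res[OF y0 dy0] my0 by simp
  next
    fix z assume zX: "z \<in> X" and z: "lq z x0 \<and> lq z y0"
    have zx0: "p z \<le> p x0" "z = res (p x0) (p z) x0" using z lq_iff[OF x0] by auto
    have zy0: "p z \<le> p y0" "z = res (p y0) (p z) y0" using z lq_iff[OF y0] by auto
    have ze: "p z \<le> e" unfolding e_def using zx0(1) zy0(1) by simp
    have zx: "z = res e (p z) x" unfolding x_def using zx0(2) res_comp[OF x0 ze ex] by simp
    have zy: "z = res e (p z) y" unfolding y_def using zy0(2) res_comp[OF y0 ze ey] by simp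
    have pzD: "p z \<in> D" unfolding D_def using ze zx zy by simp
    have "inf (p z) j = bot" using dj(2) pzD unfolding J_def by blast
    have "p z = inf (p z) (sup d j)" using ze dj(3) by (metis inf.absorb1 order_trans)
    also have "\<dots> = sup (inf (p z) d) (inf (p z) j)" by (rule inf_sup_distrib1)
    also have "\<dots> = inf (p z) d" using \<open>inf (p z) j = bot\<close> by simp
    finally have zd: "p z \<le> d" by (metis inf.orderI inf_le2 order_trans)
    have "res d (p z) m = z" unfolding m_def using rx[OF zd de] zx by simp
    then show "lq z m" using lq_iff[OF mX] pm zd by simp
  qed
  then show ?thesis by blast
qed

end

theorem proposition3p15:
  fixes X :: "'x set" and p :: "'x \<Rightarrow> 'b::{distrib_lattice,bounded_lattice_bot}"
    and res :: "'b \<Rightarrow> 'b \<Rightarrow> 'x \<Rightarrow> 'x"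
  assumes "boolean_set X p res"
  shows "(\<forall>x\<in>X. \<forall>y\<in>X. \<exists>m. is_meet X (bleq p res) x y m)
           \<longleftrightarrow> Hausdorff_space (dual_total_space X p res)"
proof -
  interpret bset X p res by (unfold_locales) (rule assms)
  show ?thesis using dir1 dir2 by blast
qed

end
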